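(* Fix $c \in (0,1)$. For every $\eta>0$ there is $q_0$ such that for every $q\ge q_0$ and every primitive Dirichlet character $\chi$ modulo $q$ whose order $d$ satisfies $d \geq e^{(\log q)^c}$, $$\sum_{\substack{p \leq q \\ \chi(p) \neq 1}} \frac{1}{p} \geq (c-\eta) \log\log q.$$
   Context: Sums over $p$ are over primes. *)

theory Defs
  imports "HOL-Analysis.Analysis" "HOL-Number_Theory.Number_Theory"
begin

definition dirichlet_character :: "nat \<Rightarrow> (nat \<Rightarrow> complex) \<Rightarrow> bool" where
  "dirichlet_character q \<psi> \<longleftrightarrow> q > 0 \<and> (\<forall>n. \<psi> (n + q) = \<psi> n) \<and>
     (\<forall>m n. \<psi> (m * n) = \<psi> m * \<psi> n) \<and> \<psi> 1 = 1 \<and>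
     (\<forall>n. \<psi> n = 0 \<longleftrightarrow> \<not> coprime n q)"

definition induced_modulus :: "nat \<Rightarrow> (nat \<Rightarrow> complex) \<Rightarrow> nat \<Rightarrow> bool" where
  "induced_modulus q \<psi> d \<longleftrightarrow> d dvd q \<and>
     (\<forall>n. coprime n q \<and> [n = 1] (mod d) \<longrightarrow> \<psi> n = 1)"

definition primitive_character :: "nat \<Rightarrow> (nat \<Rightarrow> complex) \<Rightarrow> bool" where
  "primitive_character q \<psi> \<longleftrightarrow> dirichlet_character q \<psi> \<and>
     (\<forall>d. d < q \<longrightarrow> \<not> induced_modulus q \<psi> d)"

definition character_order :: "nat \<Rightarrow> (nat \<Rightarrow> complex) \<Rightarrow> nat" where
  "character_order q \<psi> = (LEAST k. k > 0 \<and> (\<forall>n. coprime n q \<longrightarrow> \<psi> n ^ k = 1))"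

end

theory Submission
  imports Defs "HOL-Real_Asymp.Real_Asymp"
begin

lemma dc_basic:
  assumes "dirichlet_character q \<psi>"
  shows "q > 0" "\<psi> (m * n) = \<psi> m * \<psi> n" "\<psi> 1 = 1" "\<psi> n = 0 \<longleftrightarrow> \<not> coprime n q"
  using assms unfolding dirichlet_character_def by auto

lemma dc_period:
  assumes "dirichlet_character q \<psi>"
  shows "\<psi> (n + k * q) = \<psi> n"
proof (induction k)
  case 0 then show ?case by simp
next
  case (Suc k)
  have "\<psi> (n + Suc k * q) = \<psi> ((n + k * q) + q)" by (simp add: algebra_simps)
  also have "\<dots> = \<psi> (n + k * q)" using assms unfolding dirichlet_character_def by blast
  finally show ?case using Suc by simp
qed

lemma dc_mod:
  assumes "dirichlet_character q \<psi>"
  shows "\<psi> n = \<psi> (n mod q)"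
proof -
  have "n = n mod q + (n div q) * q" by simp
  then have "\<psi> n = \<psi> (n mod q + (n div q) * q)" by metis
  also have "\<dots> = \<psi> (n mod q)" by (rule dc_period[OF assms])
  finally show ?thesis .
qed

lemma nat_mod_div_inj:
  fixes n n' q :: nat
  assumes "n \<ge> 1" "n' \<ge> 1" "n mod q = n' mod q" "(n - 1) div q = (n' - 1) div q" "q > 0"
  shows "n = n'"
proof -
  have e1: "n - 1 = q * ((n - 1) div q) + (n - 1) mod q" by simp
  have e2: "n' - 1 = q * ((n' - 1) div q) + (n' - 1) mod q" by simp
  have "(n - 1) mod q < q" "(n' - 1) mod q < q" using assms by auto
  have e2': "n' - 1 = q * ((n - 1) div q) + (n' - 1) mod q" using e2 assms(4) by simp
  have "n < n' + q" "n' < n + q" using e1 e2' assms(1,2) \<open>(n - 1) mod q < q\<close> \<open>(n' - 1) mod q < q\<close> by linarith+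
  show ?thesis
  proof (cases "n \<le> n'")
    case True
    then have "q dvd n' - n" using assms(3) by (metis mod_eq_dvd_iff_nat)
    moreover have "n' - n < q" using \<open>n' < n + q\<close> assms(5) by arith
    ultimately have "n' - n = 0" using nat_dvd_not_less by blast
    then show ?thesis using True by simp
  next
    case False
    then have "n' \<le> n" by simp
    then have "q dvd n - n'" using assms(3) by (metis mod_eq_dvd_iff_nat)
    moreover have "n - n' < q" using \<open>n < n' + q\<close> assms(5) by arith
    ultimately have "n - n' = 0" using nat_dvd_not_less by blast
    then show ?thesis using False by simp
  qed
qed

lemma kernel_count:
  assumes dc: "dirichlet_character q \<psi>"
  shows "card {n \<in> {1..N*q}. \<psi> n = 1} * character_order q \<psi> \<le> N * q"
proof -
  have qpos: "q > 0" using dc_basic[OF dc] by simp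
  define U where "U = {x \<in> {..<q}. coprime x q}"
  define G where "G = \<psi> ` U"
  define K where "K = {r \<in> {..<q}. \<psi> r = 1}"
  have finU: "finite U" unfolding U_def by simp
  have finG: "finite G" unfolding G_def using finU by simp
  have finK: "finite K" unfolding K_def by simp
  have Ucard: "card U \<le> q" unfolding U_def
    by (metis (no_types, lifting) card_lessThan card_mono finite_lessThan mem_Collect_eq subsetI)
  have step1: "card {n \<in> {1..N*q}. \<psi> n = 1} \<le> card (K \<times> {..<N})"
  proof (rule card_inj_on_le[where f = "\<lambda>n. (n mod q, (n - 1) div q)"])
    show "inj_on (\<lambda>n. (n mod q, (n - 1) div q)) {n \<in> {1..N*q}. \<psi> n = 1}"
      using nat_mod_div_inj qpos by (auto simp: inj_on_def)
    show "(\<lambda>n. (n mod q, (n - 1) div q)) ` {n \<in> {1..N * q}. \<psi> n = 1} \<subseteq> K \<times> {..<N}"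
    proof (rule image_subsetI)
      fix n assume "n \<in> {n \<in> {1..N*q}. \<psi> n = 1}"
      then have n: "n \<in> {1..N*q}" "\<psi> n = 1" by auto
      show "(n mod q, (n - 1) div q) \<in> K \<times> {..<N}"
      proof -
        have "n mod q \<in> K" unfolding K_def using n qpos dc_mod[OF dc, of n] by auto
        moreover have "(n - 1) div q < N"
        proof -
          have "n - 1 < N * q" using n by auto
          then show ?thesis by (rule less_mult_imp_div_less)
        qed
        ultimately show ?thesis by simp
      qed
    qed
    show "finite (K \<times> {..<N})" using finK by simp
  qed
  have nz: "\<And>x. x \<in> U \<Longrightarrow> \<psi> x \<noteq> 0" unfolding U_def using dc_basic(4)[OF dc] by auto
  have inG: "\<psi> n \<in> G" if "coprime n q" for n
  proof -
    have "n mod q \<in> U" unfolding U_def using that qpos coprime_mod_left_iff[of q n] by auto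
    then show ?thesis unfolding G_def using dc_mod[OF dc, of n] by auto
  qed
  have closed: "z * g \<in> G" if zG: "z \<in> G" and gG: "g \<in> G" for z g
  proof -
    obtain a where a: "a \<in> U" "z = \<psi> a" using zG unfolding G_def by blast
    obtain b where b: "b \<in> U" "g = \<psi> b" using gG unfolding G_def by blast
    note ab = a(1) b(1) a(2) b(2)
    have "coprime (a*b) q" using ab unfolding U_def by auto
    then have "\<psi> (a*b) \<in> G" by (rule inG)
    then show ?thesis using ab dc_basic(2)[OF dc] by simp
  qed
  have Gnz: "g \<noteq> 0" if "g \<in> G" for g using that nz unfolding G_def by auto
  have pow: "z ^ card G = 1" if zG: "z \<in> G" for z
  proof -
    have inj: "inj_on (\<lambda>g. z * g) G" using Gnz[OF zG] by (auto simp: inj_on_def)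
    have img: "(\<lambda>g. z * g) ` G = G"
      by (rule endo_inj_surj[OF finG]) (use closed zG inj in auto)
    have "prod (\<lambda>g. g) G = prod (\<lambda>g. g) ((\<lambda>g. z * g) ` G)" using img by simp
    also have "\<dots> = prod (\<lambda>g. z * g) G" using prod.reindex[OF inj] by simp
    also have "\<dots> = z ^ card G * prod (\<lambda>g. g) G" by (simp add: prod.distrib)
    finally have "1 * prod (\<lambda>g. g) G = z ^ card G * prod (\<lambda>g. g) G" by simp
    moreover have "prod (\<lambda>g. g) G \<noteq> 0" using Gnz finG by (simp add: prod_zero_iff)
    ultimately show ?thesis by (metis mult_right_cancel)
  qed
  have oneU: "1 mod q \<in> U" unfolding U_def using qpos by (simp add: coprime_mod_left_iff)
  have Gpos: "card G > 0" using finG oneU unfolding G_def by (auto simp: card_gt_0_iff)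
  have ord_le: "character_order q \<psi> \<le> card G"
    unfolding character_order_def
    by (rule Least_le) (use Gpos pow inG in auto)
  have step3: "card (G \<times> K) \<le> card U"
  proof -
    define a where "a = (\<lambda>g. inv_into U \<psi> g)"
    have aU: "a g \<in> U" "\<psi> (a g) = g" if "g \<in> G" for g
      using that unfolding a_def G_def by (auto simp: inv_into_into f_inv_into_f)
    show ?thesis
    proof (rule card_inj_on_le[where f = "\<lambda>(g, r). (a g * r) mod q"])
      have psival: "\<psi> ((a g * r) mod q) = g" if "g \<in> G" "r \<in> K" for g r
        using that aU[OF that(1)] dc_mod[OF dc, of "a g * r"] dc_basic(2)[OF dc]
        unfolding K_def by auto
      show "inj_on (\<lambda>(g, r). a g * r mod q) (G \<times> K)"
      proof (rule inj_onI, clarify)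
        fix g r g' r' assume A: "g \<in> G" "r \<in> K" "g' \<in> G" "r' \<in> K" "a g * r mod q = a g' * r' mod q"
        have gg: "g = g'" using psival[OF A(1,2)] psival[OF A(3,4)] A(5) by simp
        have cop: "coprime (a g) q" using aU[OF A(1)] unfolding U_def by simp
        have "[a g * r = a g * r'] (mod q)" using A(5) gg unfolding cong_def by simp
        then have "[r = r'] (mod q)" using cong_mult_lcancel_nat[OF cop] by simp
        then have "r = r'" using A(2,4) unfolding K_def cong_def by auto
        then show "g = g' \<and> r = r'" using gg by simp
      qed
      show "(\<lambda>(g, r). a g * r mod q) ` (G \<times> K) \<subseteq> U"
      proof clarify
        fix g r assume "g \<in> G" "r \<in> K"
        then have "coprime (a g) q" using aU unfolding U_def by auto
        moreover have "coprime r q" using \<open>r \<in> K\<close> dc_basic(4)[OF dc, of r] unfolding K_def by auto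
        ultimately have "coprime (a g) q" "coprime r q" by auto
        then show "a g * r mod q \<in> U" unfolding U_def using qpos coprime_mod_left_iff by auto
      qed
      show "finite U" by (rule finU)
    qed
  qed
  have "card {n \<in> {1..N*q}. \<psi> n = 1} * character_order q \<psi> \<le> (card K * N) * card G"
    using step1 ord_le by (intro mult_le_mono) (auto simp: card_cartesian_product)
  also have "\<dots> = N * (card G * card K)" by simp
  also have "\<dots> \<le> N * q" using step3 Ucard by (simp add: card_cartesian_product)
  finally show ?thesis .
qed

lemma prod_primes_dvd:
  fixes N :: nat
  assumes "finite P" "\<And>p. p \<in> P \<Longrightarrow> prime p \<and> p dvd N"
  shows "\<Prod>P dvd N"
  using assms
proof (induction P rule: finite_induct)
  case empty then show ?case by simp
next
  case (insert p P)
  have pp: "prime p" "p dvd N" using insert.prems by auto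
  have "\<not> p dvd \<Prod>P"
  proof
    assume "p dvd \<Prod>P"
    then obtain x where x: "x \<in> P" "p dvd x" using prime_dvd_prod_iff[OF insert.hyps(1) pp(1)] by auto
    then have "prime x" using insert.prems by auto
    then have "p = x" using x(2) pp(1) primes_dvd_imp_eq by blast
    then show False using x(1) insert.hyps(2) by simp
  qed
  then have "coprime p (\<Prod>P)" using pp(1) prime_imp_coprime by blast
  moreover have "\<Prod>P dvd N" using insert by auto
  ultimately show ?case using pp(2) insert.hyps by (simp add: divides_mult)
qed

lemma central_binom_le: "(2*m+1) choose m \<le> 4 ^ m"
proof -
  have "(2*m+1) choose m \<le> sum ((choose) (2 * m + 1)) {..m}"
    by (rule member_le_sum) auto
  also have "\<dots> = 2 ^ (2*m)" by (rule binomial_r_part_sum)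
  also have "\<dots> = 4 ^ m" by (simp add: power_mult)
  finally show ?thesis .
qed

lemma primes_mid_dvd: "\<Prod>{p. prime p \<and> m + 1 < p \<and> p \<le> 2*m+1} dvd ((2*m+1) choose m)"
proof (rule prod_primes_dvd)
  show "finite {p. prime p \<and> m + 1 < p \<and> p \<le> 2*m+1}" by simp
  fix p assume p: "p \<in> {p. prime p \<and> m + 1 < p \<and> p \<le> 2*m+1}"
  have f: "fact m * fact (m + 1) * ((2*m+1) choose m) = (fact (2*m+1) :: nat)"
    using binomial_fact_lemma[of m "2*m+1"] by simp
  have pp: "prime p" "m+1 < p" "p \<le> 2*m+1" using p by auto
  have "p dvd fact (2*m+1)" using pp prime_dvd_fact_iff[of p "2*m+1"] by blast
  then have "p dvd fact m * fact (m + 1) * ((2*m+1) choose m)" using f by simp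
  moreover have "\<not> p dvd fact m" using p prime_dvd_fact_iff[of p m] by auto
  moreover have "\<not> p dvd fact (m+1)" using p prime_dvd_fact_iff[of p "m+1"] by auto
  ultimately have "p dvd ((2*m+1) choose m)" using p by (auto simp: prime_dvd_mult_iff)
  then show "prime p \<and> p dvd ((2*m+1) choose m)" using p by auto
qed

lemma primorial_le: "\<Prod>{p::nat. prime p \<and> p \<le> n} \<le> 4 ^ n"
proof (induction n rule: less_induct)
  case (less n)
  show ?case
  proof (cases "n \<le> 2")
    case True
    have "{p::nat. prime p \<and> p \<le> n} \<subseteq> {2}"
    proof
      fix p assume "p \<in> {p::nat. prime p \<and> p \<le> n}"
      then have "prime p" "p \<le> n" by auto
      then show "p \<in> {2}" using prime_ge_2_nat[of p] True by simp
    qed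
    then have "{p::nat. prime p \<and> p \<le> n} = {} \<or> {p::nat. prime p \<and> p \<le> n} = {2}" by blast
    then show ?thesis
    proof
      assume h: "{p::nat. prime p \<and> p \<le> n} = {}"
      have "\<Prod>{p::nat. prime p \<and> p \<le> n} = 1" unfolding h by simp
      then show ?thesis by simp
    next
      assume h: "{p::nat. prime p \<and> p \<le> n} = {2}"
      then have "2 \<le> n" by auto
      then have "(4::nat) ^ 2 \<le> 4 ^ n" by (intro power_increasing) auto
      then show ?thesis using h by simp
    qed
  next
    case False
    show ?thesis
    proof (cases "even n")
      case True
      then have "\<not> prime n" using False prime_odd_nat[of n] by auto
      have "{p::nat. prime p \<and> p \<le> n} = {p. prime p \<and> p \<le> n - 1}"
      proof (rule Collect_cong)
        fix p show "(prime p \<and> p \<le> n) = (prime p \<and> p \<le> n - 1)"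
          using \<open>\<not> prime n\<close> by (cases "p = n") auto
      qed
      moreover have "\<Prod>{p::nat. prime p \<and> p \<le> n - 1} \<le> 4 ^ (n - 1)" using less[of "n-1"] False by linarith
      ultimately have "\<Prod>{p::nat. prime p \<and> p \<le> n} \<le> 4 ^ (n - 1)" by simp
      also have "\<dots> \<le> 4 ^ n" by (intro power_increasing) auto
      finally show ?thesis .
    next
      case odd: False
      then obtain m where m: "n = 2*m+1" by (metis oddE)
      have m1: "m \<ge> 1" using False m by simp
      have split: "{p::nat. prime p \<and> p \<le> n} = {p. prime p \<and> p \<le> m + 1} \<union> {p. prime p \<and> m + 1 < p \<and> p \<le> 2*m+1}"
        using m by auto
      have "\<Prod>{p::nat. prime p \<and> p \<le> n} = \<Prod>{p. prime p \<and> p \<le> m + 1} * \<Prod>{p. prime p \<and> m + 1 < p \<and> p \<le> 2*m+1}"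
        unfolding split by (rule prod.union_disjoint) auto
      also have "\<dots> \<le> 4 ^ (m+1) * 4 ^ m"
      proof (rule mult_le_mono)
        show "\<Prod>{p. prime p \<and> p \<le> m + 1} \<le> 4 ^ (m+1)" using less[of "m+1"] m m1 by simp
        have "\<Prod>{p. prime p \<and> m + 1 < p \<and> p \<le> 2*m+1} \<le> (2*m+1) choose m"
          by (rule dvd_imp_le[OF primes_mid_dvd]) (simp add: m1)
        also have "\<dots> \<le> 4 ^ m" by (rule central_binom_le)
        finally show "\<Prod>{p. prime p \<and> m + 1 < p \<and> p \<le> 2*m+1} \<le> 4 ^ m" .
      qed
      also have "\<dots> = 4 ^ n" using m by (simp add: power_add[symmetric])
      finally show ?thesis .
    qed
  qed
qed

lemma theta_le: "(\<Sum>p\<in>{p::nat. prime p \<and> p \<le> n}. ln (real p)) \<le> real n * ln 4"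
proof -
  have fin: "finite {p::nat. prime p \<and> p \<le> n}" by simp
  have "(\<Sum>p\<in>{p::nat. prime p \<and> p \<le> n}. ln (real p)) = ln (real (\<Prod>{p::nat. prime p \<and> p \<le> n}))"
    using ln_prod[OF fin, of real] prime_gt_0_nat by (simp add: of_nat_prod)
  also have "\<dots> \<le> ln (4 ^ n)"
  proof (rule ln_mono)
    have "0 < \<Prod>{p::nat. prime p \<and> p \<le> n}" using prime_gt_0_nat by (intro prod_pos) auto
    then show "0 < real (\<Prod>{p::nat. prime p \<and> p \<le> n})" by (simp only: of_nat_0_less_iff)
    have "real (\<Prod>{p::nat. prime p \<and> p \<le> n}) \<le> real (4 ^ n)" using primorial_le[of n] by (rule of_nat_mono)
    then show "real (\<Prod>{p::nat. prime p \<and> p \<le> n}) \<le> 4 ^ n" by simp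
  qed
  also have "\<dots> = real n * ln 4" by (simp add: ln_realpow)
  finally show ?thesis .
qed

abbreviation PS :: "nat \<Rightarrow> nat set" where "PS n \<equiv> {p. prime p \<and> p \<le> n}"

lemma card_multiples:
  fixes m n :: nat
  assumes "m > 0"
  shows "card {k \<in> {1..n}. m dvd k} = n div m"
proof -
  have "{k \<in> {1..n}. m dvd k} = (\<lambda>j. m * j) ` {1..n div m}"
  proof (intro equalityI subsetI)
    fix k assume "k \<in> {k \<in> {1..n}. m dvd k}"
    then obtain j where j: "k = m * j" "1 \<le> k" "k \<le> n" by (auto elim: dvdE)
    then have "1 \<le> j" by (cases j) auto
    moreover have "j \<le> n div m" using j assms by (simp add: less_eq_div_iff_mult_less_eq mult.commute)
    ultimately show "k \<in> (\<lambda>j. m * j) ` {1..n div m}" using j by auto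
  next
    fix k assume "k \<in> (\<lambda>j. m * j) ` {1..n div m}"
    then obtain j where jA: "j \<in> {1..n div m}" and jk: "k = m * j" by (rule imageE)
    from jA have j: "k = m * j" "1 \<le> j" "j \<le> n div m" using jk by auto
    then have "m * j \<le> n" using assms by (simp add: less_eq_div_iff_mult_less_eq mult.commute)
    moreover have "1 \<le> m * j" using j assms by simp
    ultimately show "k \<in> {k \<in> {1..n}. m dvd k}" using j by auto
  qed
  moreover have "inj_on (\<lambda>j. m * j) {1..n div m}" using assms by (auto simp: inj_on_def)
  ultimately show ?thesis by (simp add: card_image)
qed

lemma mult_as_card:
  fixes p k n :: nat
  assumes "prime p" "1 \<le> k" "k \<le> n"
  shows "multiplicity p k = card {a \<in> {1..n}. p ^ a dvd k}"
proof -
  have k0: "k \<noteq> 0" using assms by simp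
  have nu: "\<not> is_unit p" using assms(1) not_prime_unit by blast
  have "p ^ multiplicity p k dvd k" by (rule multiplicity_dvd)
  then have "p ^ multiplicity p k \<le> k" using k0 by (intro dvd_imp_le) auto
  moreover have "multiplicity p k < 2 ^ multiplicity p k" by (rule less_exp)
  moreover have "2 ^ multiplicity p k \<le> p ^ multiplicity p k"
    using prime_ge_2_nat[OF assms(1)] by (intro power_mono) auto
  ultimately have mle: "multiplicity p k \<le> n" using assms(3) by linarith
  have "{a \<in> {1..n}. p ^ a dvd k} = {1..multiplicity p k}"
  proof (intro equalityI subsetI)
    fix a assume "a \<in> {a \<in> {1..n}. p ^ a dvd k}"
    then show "a \<in> {1..multiplicity p k}" using power_dvd_iff_le_multiplicity[OF k0 nu, of a] by auto
  next
    fix a assume a: "a \<in> {1..multiplicity p k}"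
    then have "p ^ a dvd k" using power_dvd_iff_le_multiplicity[OF k0 nu, of a] by auto
    then show "a \<in> {a \<in> {1..n}. p ^ a dvd k}" using a mle by auto
  qed
  then show ?thesis by simp
qed

lemma ln_as_sum:
  fixes k n :: nat
  assumes "1 \<le> k" "k \<le> n"
  shows "ln (real k) = (\<Sum>p\<in>PS n. ln (real p) * real (card {a \<in> {1..n}. p ^ a dvd k}))"
proof -
  have k0: "k \<noteq> 0" using assms by simp
  have "real k = real (\<Prod>p\<in>prime_factors k. p ^ multiplicity p k)"
    using prod_prime_factors[OF k0] by simp
  also have "\<dots> = (\<Prod>p\<in>prime_factors k. real p ^ multiplicity p k)" by (simp add: of_nat_prod)
  finally have "ln (real k) = ln (\<Prod>p\<in>prime_factors k. real p ^ multiplicity p k)" by simp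
  also have "\<dots> = (\<Sum>p\<in>prime_factors k. ln (real p ^ multiplicity p k))"
    by (rule ln_prod) (auto dest: in_prime_factors_imp_prime simp: prime_gt_0_nat)
  also have "\<dots> = (\<Sum>p\<in>prime_factors k. ln (real p) * real (multiplicity p k))"
  proof (rule sum.cong[OF refl])
    fix p assume "p \<in> prime_factors k"
    then have "prime p" by (rule in_prime_factors_imp_prime)
    then have "real p > 0" using prime_gt_0_nat by simp
    then show "ln (real p ^ multiplicity p k) = ln (real p) * real (multiplicity p k)"
      by (simp add: ln_realpow)
  qed
  also have "\<dots> = (\<Sum>p\<in>PS n. ln (real p) * real (multiplicity p k))"
  proof (rule sum.mono_neutral_left)
    show "finite (PS n)" by simp
    show "prime_factors k \<subseteq> PS n"
    proof
      fix p assume p: "p \<in> prime_factors k"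
      then have "prime p" "p dvd k" by (auto dest: in_prime_factors_imp_prime)
      then have "p \<le> k" using k0 by (simp add: dvd_imp_le)
      then show "p \<in> PS n" using \<open>prime p\<close> assms by auto
    qed
    show "\<forall>i\<in>PS n - prime_factors k. ln (real i) * real (multiplicity i k) = 0"
    proof
      fix i assume i: "i \<in> PS n - prime_factors k"
      then have "\<not> i dvd k" using k0 by (auto simp: in_prime_factors_iff)
      then have "multiplicity i k = 0" by (rule not_dvd_imp_multiplicity_0)
      then show "ln (real i) * real (multiplicity i k) = 0" by simp
    qed
  qed
  also have "\<dots> = (\<Sum>p\<in>PS n. ln (real p) * real (card {a \<in> {1..n}. p ^ a dvd k}))"
  proof (rule sum.cong[OF refl])
    fix p assume "p \<in> PS n"
    then have "prime p" by simp
    then have "multiplicity p k = card {a \<in> {1..n}. p ^ a dvd k}" using assms by (intro mult_as_card)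
    then show "ln (real p) * real (multiplicity p k) = ln (real p) * real (card {a \<in> {1..n}. p ^ a dvd k})"
      by simp
  qed
  finally show ?thesis .
qed

lemma legendre_ln:
  fixes n :: nat
  shows "ln (fact n) = (\<Sum>p\<in>PS n. ln (real p) * (\<Sum>a\<in>{1..n}. real (n div p ^ a)))"
proof -
  have "ln (fact n :: real) = ln (\<Prod>k\<in>{1..n}. real k)" by (simp add: fact_prod of_nat_prod)
  also have "\<dots> = (\<Sum>k\<in>{1..n}. ln (real k))" by (rule ln_prod) auto
  also have "\<dots> = (\<Sum>k\<in>{1..n}. \<Sum>p\<in>PS n. ln (real p) * real (card {a \<in> {1..n}. p ^ a dvd k}))"
    by (intro sum.cong refl ln_as_sum) auto
  also have "\<dots> = (\<Sum>p\<in>PS n. \<Sum>k\<in>{1..n}. ln (real p) * real (card {a \<in> {1..n}. p ^ a dvd k}))"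
    by (rule sum.swap)
  also have "\<dots> = (\<Sum>p\<in>PS n. ln (real p) * (\<Sum>a\<in>{1..n}. real (n div p ^ a)))"
  proof (rule sum.cong[OF refl])
    fix p assume p: "p \<in> PS n"
    have "(\<Sum>k\<in>{1..n}. real (card {a \<in> {1..n}. p ^ a dvd k}))
        = (\<Sum>k\<in>{1..n}. \<Sum>a\<in>{1..n}. if p ^ a dvd k then 1 else 0)"
      by (rule sum.cong[OF refl]) (simp add: sum.inter_filter[symmetric])
    also have "\<dots> = (\<Sum>a\<in>{1..n}. \<Sum>k\<in>{1..n}. if p ^ a dvd k then 1 else 0)"
      by (rule sum.swap)
    also have "\<dots> = (\<Sum>a\<in>{1..n}. real (card {k \<in> {1..n}. p ^ a dvd k}))"
      by (rule sum.cong[OF refl]) (simp add: sum.inter_filter[symmetric])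
    also have "\<dots> = (\<Sum>a\<in>{1..n}. real (n div p ^ a))"
    proof (rule sum.cong[OF refl])
      fix a assume "a \<in> {1..n}"
      have "p > 0" using p prime_gt_0_nat by auto
      then have "card {k \<in> {1..n}. p ^ a dvd k} = n div p ^ a" by (intro card_multiples) simp
      then show "real (card {k \<in> {1..n}. p ^ a dvd k}) = real (n div p ^ a)" by simp
    qed
    finally show "(\<Sum>k\<in>{1..n}. ln (real p) * real (card {a \<in> {1..n}. p ^ a dvd k}))
        = ln (real p) * (\<Sum>a\<in>{1..n}. real (n div p ^ a))"
      by (simp add: sum_distrib_left[symmetric])
  qed
  finally show ?thesis .
qed

definition Amert :: "nat \<Rightarrow> real" where
  "Amert n = (\<Sum>p\<in>PS n. ln (real p) / real p)"

lemma ln_fact_upper: "ln (fact n :: real) \<le> real n * ln (real n)"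
proof (cases "n = 0")
  case True then show ?thesis by simp
next
  case False
  have "(fact n :: real) \<le> real (n ^ n)" by (rule fact_le_power)
  then have "ln (fact n :: real) \<le> ln (real n ^ n)" by (intro ln_mono) auto
  also have "\<dots> = real n * ln (real n)" using False by (simp add: ln_realpow)
  finally show ?thesis .
qed

lemma pow_le_fact_exp: "real n ^ n \<le> fact n * exp (real n)"
proof (induction n)
  case 0 then show ?case by simp
next
  case (Suc n)
  have key: "(real n + 1) ^ n \<le> real n ^ n * exp 1"
  proof (cases "n = 0")
    case True then show ?thesis by simp
  next
    case False
    then have np: "real n > 0" by simp
    have "real n + 1 = real n * (1 + 1 / real n)" using np by (simp add: field_simps)
    also have "\<dots> \<le> real n * exp (1 / real n)"
      using np exp_ge_add_one_self[of "1 / real n"] by (intro mult_left_mono) auto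
    finally have "(real n + 1) ^ n \<le> (real n * exp (1 / real n)) ^ n"
      by (intro power_mono) auto
    also have "\<dots> = real n ^ n * exp (1 / real n) ^ n" by (simp add: power_mult_distrib)
    also have "exp (1 / real n) ^ n = exp (real n * (1 / real n))" by (simp add: exp_of_nat_mult[symmetric])
    also have "real n * (1 / real n) = 1" using np by simp
    finally show ?thesis .
  qed
  have "real (Suc n) ^ Suc n = (real n + 1) * (real n + 1) ^ n" by (simp add: add.commute)
  also have "\<dots> \<le> (real n + 1) * (real n ^ n * exp 1)"
    using key by (intro mult_left_mono) auto
  also have "\<dots> \<le> (real n + 1) * (fact n * exp (real n) * exp 1)"
    using Suc.IH by (intro mult_left_mono) auto
  also have "\<dots> = fact (Suc n) * exp (real (Suc n))" by (simp add: exp_add algebra_simps)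
  finally show ?case .
qed

lemma ln_fact_lower: "real n * ln (real n) - real n \<le> ln (fact n :: real)"
proof (cases "n = 0")
  case True then show ?thesis by simp
next
  case False
  have "ln (real n ^ n) \<le> ln (fact n * exp (real n))"
    using pow_le_fact_exp[of n] False by (intro ln_mono) auto
  also have "\<dots> = ln (fact n) + real n" by (simp add: ln_mult)
  finally show ?thesis using False by (simp add: ln_realpow)
qed

lemma mertens_upper:
  assumes "n \<ge> 1"
  shows "Amert n \<le> ln (real n) + ln 4"
proof -
  have "(\<Sum>p\<in>PS n. ln (real p) * (real n / real p - 1)) \<le> (\<Sum>p\<in>PS n. ln (real p) * (\<Sum>a\<in>{1..n}. real (n div p ^ a)))"
  proof (rule sum_mono)
    fix p assume p: "p \<in> PS n"
    then have pp: "prime p" "p \<le> n" by auto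
    have p0: "real p > 0" using prime_gt_0_nat[OF pp(1)] by simp
    have "real n = real (n div p) * real p + real (n mod p)"
      by (metis div_mult_mod_eq of_nat_add of_nat_mult)
    moreover have "real (n mod p) < real p" using prime_gt_0_nat[OF pp(1)] by simp
    ultimately have "real n / real p - 1 \<le> real (n div p)" using p0 by (simp add: field_simps)
    also have "\<dots> \<le> (\<Sum>a\<in>{1..n}. real (n div p ^ a))"
      using member_le_sum[of 1 "{1..n}" "\<lambda>a. real (n div p ^ a)"] assms by simp
    finally show "ln (real p) * (real n / real p - 1) \<le> ln (real p) * (\<Sum>a\<in>{1..n}. real (n div p ^ a))"
      using pp prime_gt_0_nat[OF pp(1)] by (intro mult_left_mono) auto
  qed
  also have "\<dots> = ln (fact n)" by (rule legendre_ln[symmetric])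
  also have "\<dots> \<le> real n * ln (real n)" by (rule ln_fact_upper)
  finally have A: "(\<Sum>p\<in>PS n. ln (real p) * (real n / real p - 1)) \<le> real n * ln (real n)" .
  have "(\<Sum>p\<in>PS n. ln (real p) * (real n / real p - 1)) = real n * Amert n - (\<Sum>p\<in>PS n. ln (real p))"
    unfolding Amert_def by (simp add: sum_distrib_left sum_subtractf algebra_simps)
  with A theta_le[of n] have "real n * Amert n \<le> real n * ln (real n) + real n * ln 4" by simp
  then have "real n * Amert n \<le> real n * (ln (real n) + ln 4)" by (simp add: algebra_simps)
  then show ?thesis using assms by (simp add: mult_le_cancel_left)
qed

lemma geom_bound:
  fixes x :: real
  assumes "0 \<le> x" "x < 1"
  shows "(\<Sum>a\<in>{1..n}. x ^ a) \<le> x / (1 - x)"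
proof -
  have "(1 - x) * (\<Sum>a\<in>{1..n}. x ^ a) = x - x ^ Suc n"
  proof (induction n)
    case 0 then show ?case by simp
  next
    case (Suc n)
    have "(\<Sum>a\<in>{1..Suc n}. x ^ a) = (\<Sum>a\<in>{1..n}. x ^ a) + x ^ Suc n" by simp
    then have "(1 - x) * (\<Sum>a\<in>{1..Suc n}. x ^ a) = (1 - x) * (\<Sum>a\<in>{1..n}. x ^ a) + (1 - x) * x ^ Suc n"
      by (simp add: algebra_simps)
    also have "\<dots> = x - x ^ Suc (Suc n)" using Suc.IH by (simp add: algebra_simps)
    finally show ?case .
  qed
  then have "(1 - x) * (\<Sum>a\<in>{1..n}. x ^ a) \<le> x" using assms by simp
  then show ?thesis using assms by (simp add: field_simps)
qed

lemma ln_le_2sqrt: "ln (1 + s^2) \<le> 2 * s" if "s \<ge> 0" for s :: real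
proof -
  have pos: "0 < 1 + s^2" by (simp add: add_pos_nonneg)
  have "1 + s^2 \<le> (1 + s)^2" using that by (simp add: power2_eq_square algebra_simps)
  then have "ln (1 + s^2) \<le> ln ((1 + s)^2)" using pos by (rule ln_mono)
  also have "\<dots> = 2 * ln (1 + s)" using that by (simp add: ln_realpow)
  also have "\<dots> \<le> 2 * s" using ln_add_one_self_le_self[of s] that by simp
  finally show ?thesis .
qed

lemma tele_step:
  assumes "j \<ge> 1"
  shows "ln (real j + 1) / ((real j + 1) * real j) \<le> 4 / sqrt (real j) - 4 / sqrt (real j + 1)"
proof -
  define s where "s = sqrt (real j)"
  define t where "t = sqrt (real j + 1)"
  have s1: "s \<ge> 1" unfolding s_def using assms by simp
  have ts: "t > s" unfolding s_def t_def by simp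
  have s2: "s^2 = real j" unfolding s_def by simp
  have t2: "t^2 = real j + 1" unfolding t_def by simp
  have "4 / s - 4 / t = 4 * (t - s) / (s * t)" using s1 ts by (simp add: field_simps)
  also have "t - s = 1 / (t + s)" using s1 ts s2 t2 by (simp add: field_simps power2_eq_square)
  finally have e: "4 / s - 4 / t = 4 / (s * t * (t + s))" using s1 ts by (simp add: field_simps)
  have "s * t * (t + s) \<le> s * t * (2 * t)" using s1 ts by (intro mult_left_mono) auto
  then have "4 / (s * t * (2 * t)) \<le> 4 / (s * t * (t + s))" using s1 ts
    by (intro divide_left_mono) auto
  also have "4 / (s * t * (2 * t)) = 2 / (s * (real j + 1))" using s1 ts t2 by (simp add: field_simps power2_eq_square)
  finally have low: "2 / (s * (real j + 1)) \<le> 4 / s - 4 / t" using e by simp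
  have "ln (real j + 1) \<le> 2 * s" using ln_le_2sqrt[of s] s1 s2 by (simp add: add.commute)
  then have a1: "ln (real j + 1) / ((real j + 1) * real j) \<le> 2 * s / ((real j + 1) * real j)"
    using assms by (intro divide_right_mono) auto
  have d: "(real j + 1) * real j = (s * (real j + 1)) * s" using s2 by (simp add: power2_eq_square algebra_simps)
  have a2: "2 * s / ((real j + 1) * real j) = 2 / (s * (real j + 1))" unfolding d using s1 by simp
  have "ln (real j + 1) / ((real j + 1) * real j) \<le> 4 / s - 4 / t" using a1 a2 low by linarith
  then show ?thesis unfolding s_def t_def .
qed

lemma sum_lnsq_bound: "(\<Sum>m\<in>{2..n}. ln (real m) / (real m * (real m - 1))) \<le> 4 - 4 / sqrt (real n)" if "n \<ge> 1" for n :: nat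
  using that
proof (induction n rule: dec_induct)
  case base then show ?case by simp
next
  case (step j)
  have "(\<Sum>m\<in>{2..Suc j}. ln (real m) / (real m * (real m - 1)))
      = (\<Sum>m\<in>{2..j}. ln (real m) / (real m * (real m - 1))) + ln (real j + 1) / ((real j + 1) * real j)"
    using step.hyps by (simp add: add.commute)
  also have "\<dots> \<le> 4 - 4 / sqrt (real j) + (4 / sqrt (real j) - 4 / sqrt (real j + 1))"
    using step.IH tele_step[OF step.hyps(1)] by linarith
  finally show ?case by (simp add: add.commute)
qed

lemma mertens_lower:
  assumes "n \<ge> 1"
  shows "Amert n \<ge> ln (real n) - 5"
proof -
  have "real n * ln (real n) - real n \<le> ln (fact n)" by (rule ln_fact_lower)
  also have "\<dots> = (\<Sum>p\<in>PS n. ln (real p) * (\<Sum>a\<in>{1..n}. real (n div p ^ a)))" by (rule legendre_ln)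
  also have "\<dots> \<le> (\<Sum>p\<in>PS n. ln (real p) * (real n * (1 / (real p - 1))))"
  proof (rule sum_mono)
    fix p assume p: "p \<in> PS n"
    then have pp: "prime p" by auto
    have p2: "real p \<ge> 2" using prime_ge_2_nat[OF pp] by simp
    have "(\<Sum>a\<in>{1..n}. real (n div p ^ a)) \<le> (\<Sum>a\<in>{1..n}. real n * (1 / real p) ^ a)"
    proof (rule sum_mono)
      fix a
      have "real (n div p ^ a) \<le> real n / real (p ^ a)" by (rule of_nat_div_le_of_nat)
      then show "real (n div p ^ a) \<le> real n * (1 / real p) ^ a" by (simp add: power_divide)
    qed
    also have "\<dots> = real n * (\<Sum>a\<in>{1..n}. (1 / real p) ^ a)" by (simp add: sum_distrib_left)
    also have "\<dots> \<le> real n * ((1 / real p) / (1 - 1 / real p))"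
      using p2 by (intro mult_left_mono geom_bound) auto
    also have "(1 / real p) / (1 - 1 / real p) = 1 / (real p - 1)" using p2 by (simp add: field_simps)
    finally show "ln (real p) * (\<Sum>a\<in>{1..n}. real (n div p ^ a)) \<le> ln (real p) * (real n * (1 / (real p - 1)))"
      using p2 by (intro mult_left_mono) auto
  qed
  also have "\<dots> = real n * (\<Sum>p\<in>PS n. ln (real p) / (real p - 1))"
    by (subst sum_distrib_left) (rule sum.cong, simp_all)
  also have "(\<Sum>p\<in>PS n. ln (real p) / (real p - 1)) = Amert n + (\<Sum>p\<in>PS n. ln (real p) / (real p * (real p - 1)))"
  proof -
    have "(\<Sum>p\<in>PS n. ln (real p) / (real p - 1)) = (\<Sum>p\<in>PS n. ln (real p) / real p + ln (real p) / (real p * (real p - 1)))"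
    proof (rule sum.cong[OF refl])
      fix p assume "p \<in> PS n"
      then have p2: "real p \<ge> 2" using prime_ge_2_nat by auto
      then show "ln (real p) / (real p - 1) = ln (real p) / real p + ln (real p) / (real p * (real p - 1))"
        by (simp add: field_simps)
    qed
    then show ?thesis unfolding Amert_def by (simp add: sum.distrib)
  qed
  also have "real n * (Amert n + (\<Sum>p\<in>PS n. ln (real p) / (real p * (real p - 1)))) \<le> real n * (Amert n + 4)"
  proof -
    have "(\<Sum>p\<in>PS n. ln (real p) / (real p * (real p - 1))) \<le> (\<Sum>m\<in>{2..n}. ln (real m) / (real m * (real m - 1)))"
    proof (rule sum_mono2)
      show "finite {2..n}" by simp
      show "PS n \<subseteq> {2..n}" using prime_ge_2_nat by auto
      fix b assume "b \<in> {2..n} - PS n"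
      then show "0 \<le> ln (real b) / (real b * (real b - 1))" by auto
    qed
    also have "\<dots> \<le> 4 - 4 / sqrt (real n)" using sum_lnsq_bound assms by blast
    also have "\<dots> \<le> 4" by simp
    finally show ?thesis by (intro mult_left_mono) auto
  qed
  finally have "real n * ln (real n) - real n \<le> real n * (Amert n + 4)" .
  then have "real n * (ln (real n) - 1) \<le> real n * (Amert n + 4)" by (simp add: algebra_simps)
  then have "ln (real n) - 1 \<le> Amert n + 4" using assms by (simp add: mult_le_cancel_left)
  then show ?thesis by simp
qed

lemma dc_prod:
  assumes dc: "dirichlet_character q \<psi>" and "finite B"
  shows "\<psi> (\<Prod>B) = (\<Prod>p\<in>B. \<psi> p)"
  using assms(2)
proof (induction B rule: finite_induct)
  case empty then show ?case using dc_basic(3)[OF dc] by simp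
next
  case (insert x B) then show ?case using dc_basic(2)[OF dc] by simp
qed

lemma subset_products:
  fixes b :: real
  assumes dc: "dirichlet_character q \<psi>" and fin: "finite P0"
    and P0: "\<And>p. p \<in> P0 \<Longrightarrow> prime p \<and> \<psi> p = 1 \<and> real p \<le> b"
    and kP: "k \<le> card P0" and bk: "b ^ k \<le> real (N * q)"
  shows "card P0 choose k \<le> card {n \<in> {1..N*q}. \<psi> n = 1}"
proof -
  have "card P0 choose k = card {B. B \<subseteq> P0 \<and> card B = k}" by (rule n_subsets[OF fin, symmetric])
  also have "\<dots> \<le> card {n \<in> {1..N*q}. \<psi> n = 1}"
  proof (rule card_inj_on_le[where f = "\<lambda>B. \<Prod>B"])
    show "inj_on (\<lambda>B. \<Prod>B) {B. B \<subseteq> P0 \<and> card B = k}"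
    proof (rule inj_onI)
      fix B B' assume B: "B \<in> {B. B \<subseteq> P0 \<and> card B = k}" and B': "B' \<in> {B. B \<subseteq> P0 \<and> card B = k}"
        and eq: "\<Prod>B = \<Prod>B'"
      have finB: "finite B" "finite B'" using B B' fin finite_subset by auto
      have key: "B = {p \<in> P0. p dvd \<Prod>B}" if BP: "B \<subseteq> P0" and BF: "finite B" for B
      proof (intro equalityI subsetI)
        fix p assume "p \<in> B" then show "p \<in> {p \<in> P0. p dvd \<Prod>B}"
          using BP BF by (auto intro: dvd_prodI)
      next
        fix p assume p: "p \<in> {p \<in> P0. p dvd \<Prod>B}"
        then have pp: "prime p" using P0 by auto
        from p have "p dvd \<Prod>B" by simp
        then obtain x where x: "x \<in> B" "p dvd x" using prime_dvd_prod_iff[OF BF pp] by auto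
        then have "prime x" using P0 BP by auto
        then have "p = x" using x(2) pp primes_dvd_imp_eq by blast
        then show "p \<in> B" using x by simp
      qed
      show "B = B'" using key[of B] key[of B'] B B' finB eq by auto
    qed
    show "(\<lambda>B. \<Prod>B) ` {B. B \<subseteq> P0 \<and> card B = k} \<subseteq> {n \<in> {1..N*q}. \<psi> n = 1}"
    proof (rule image_subsetI)
      fix B assume "B \<in> {B. B \<subseteq> P0 \<and> card B = k}"
      then have B: "B \<subseteq> P0" "card B = k" by auto
      have finB: "finite B" using B fin finite_subset by auto
      have pos: "\<Prod>B \<ge> 1"
      proof -
        have "\<Prod>B > 0" using B P0 prime_gt_0_nat by (intro prod_pos) blast
        then show ?thesis by simp
      qed
      have "real (\<Prod>B) = (\<Prod>p\<in>B. real p)" by (simp add: of_nat_prod)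
      also have "\<dots> \<le> (\<Prod>p\<in>B. b)"
        using B P0 by (intro prod_mono) auto
      also have "\<dots> = b ^ k" using B by simp
      also have "\<dots> \<le> real (N * q)" by (rule bk)
      finally have "\<Prod>B \<le> N * q" by (simp only: of_nat_le_iff)
      moreover have "\<psi> (\<Prod>B) = 1"
        using dc_prod[OF dc finB] B P0 by (auto intro: prod.neutral)
      ultimately show "\<Prod>B \<in> {n \<in> {1..N*q}. \<psi> n = 1}" using pos by auto
    qed
    show "finite {n \<in> {1..N*q}. \<psi> n = 1}" by simp
  qed
  finally show ?thesis .
qed

definition PR :: "real \<Rightarrow> real \<Rightarrow> nat set" where
  "PR a b = {p. prime p \<and> a < real p \<and> real p \<le> b}"

lemma PR_finite: "finite (PR a b)"
proof -
  have "PR a b \<subseteq> {..nat \<lfloor>b\<rfloor>}" unfolding PR_def by (auto intro: le_nat_floor)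
  then show ?thesis using finite_subset by blast
qed

lemma PS_real: "1 \<le> x \<Longrightarrow> PS (nat \<lfloor>x\<rfloor>) = {p. prime p \<and> real p \<le> x}"
proof -
  assume x: "1 \<le> x"
  have "\<lfloor>x\<rfloor> \<ge> 0" using x by simp
  then have "\<And>p. p \<le> nat \<lfloor>x\<rfloor> \<longleftrightarrow> real p \<le> x" by (simp add: le_nat_iff le_floor_iff)
  then show ?thesis by auto
qed

lemma interval_mass:
  assumes "1 \<le> a" "a \<le> b" "1 < b"
  shows "(\<Sum>p\<in>PR a b. 1 / real p) \<ge> (ln b - ln a - 8) / ln b"
proof -
  define na where "na = nat \<lfloor>a\<rfloor>"
  define nb where "nb = nat \<lfloor>b\<rfloor>"
  have na1: "na \<ge> 1" unfolding na_def using assms by (simp add: le_nat_floor)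
  have nb1: "nb \<ge> 1" unfolding nb_def using assms by (simp add: le_nat_floor)
  have naa: "real na \<le> a" unfolding na_def using assms by simp
  have nbb: "2 * real nb \<ge> b"
  proof -
    have "real nb = of_int \<lfloor>b\<rfloor>" unfolding nb_def using assms by simp
    moreover have "b < of_int \<lfloor>b\<rfloor> + 1" by linarith
    ultimately show ?thesis using nb1 by linarith
  qed
  have lnb: "ln b > 0" using assms by simp
  have split: "PS nb = PS na \<union> PR a b"
    unfolding PR_def using PS_real[of a] PS_real[of b] assms na_def nb_def by auto
  have disj: "PS na \<inter> PR a b = {}"
    unfolding PR_def using PS_real[of a] assms na_def by auto
  have "Amert nb = Amert na + (\<Sum>p\<in>PR a b. ln (real p) / real p)"
    unfolding Amert_def split by (rule sum.union_disjoint) (use disj PR_finite in auto)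
  moreover have "Amert nb \<ge> ln (real nb) - 5" using mertens_lower nb1 by blast
  moreover have "Amert na \<le> ln (real na) + ln 4" using mertens_upper na1 by blast
  moreover have "ln (real na) \<le> ln a" using naa na1 by (intro ln_mono) auto
  moreover have "ln b \<le> ln 2 + ln (real nb)"
  proof -
    have "ln b \<le> ln (2 * real nb)" using nbb assms by (intro ln_mono) auto
    also have "\<dots> = ln 2 + ln (real nb)" using nb1 by (simp add: ln_mult)
    finally show ?thesis .
  qed
  moreover have "ln 4 = 2 * ln (2::real)"
    using ln_mult[of 2 2] by simp
  moreover have "ln (2::real) < 1" by (rule ln_2_less_1)
  ultimately have diff: "(\<Sum>p\<in>PR a b. ln (real p) / real p) \<ge> ln b - ln a - 8" by linarith
  have "(\<Sum>p\<in>PR a b. ln (real p) / real p) / ln b = (\<Sum>p\<in>PR a b. (ln (real p) / real p) / ln b)"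
    by (simp add: sum_divide_distrib)
  also have "\<dots> \<le> (\<Sum>p\<in>PR a b. 1 / real p)"
  proof (rule sum_mono)
    fix p assume "p \<in> PR a b"
    then have p: "prime p" "real p \<le> b" unfolding PR_def by auto
    have p0: "real p > 0" using prime_gt_0_nat[OF p(1)] by simp
    have "ln (real p) \<le> ln b" using p p0 by (intro ln_mono) auto
    then have "ln (real p) / ln b \<le> 1" using lnb by simp
    then have "(ln (real p) / ln b) / real p \<le> 1 / real p" using p0 by (intro divide_right_mono) auto
    then show "(ln (real p) / real p) / ln b \<le> 1 / real p" by (simp add: field_simps)
  qed
  finally have "(\<Sum>p\<in>PR a b. ln (real p) / real p) / ln b \<le> (\<Sum>p\<in>PR a b. 1 / real p)" .
  moreover have "(ln b - ln a - 8) / ln b \<le> (\<Sum>p\<in>PR a b. ln (real p) / real p) / ln b"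
    using diff lnb by (intro divide_right_mono) auto
  ultimately show ?thesis by linarith
qed

lemma core:
  fixes c \<eta> ca cb \<mu> lg \<epsilon> Y L :: real and q :: nat and \<psi> :: "nat \<Rightarrow> complex"
  assumes dc: "dirichlet_character q \<psi>"
    and ord: "exp (lg powr c) \<le> real (character_order q \<psi>)"
    and ldef: "lg = ln (real q)" and Ldef: "L = ln lg"
    and edef: "\<epsilon> = lg powr (cb - 1)" and Ydef: "Y = lg powr (1 - ca)"
    and l3: "lg \<ge> 3"
    and hc1: "0 < ca" "ca < 1" and hc2: "cb < 1" and hmu: "0 < \<mu>" "\<mu> \<le> 1/8"
    and C1: "\<epsilon> \<le> \<mu>"
    and C2: "8 / Y \<le> \<mu> * \<epsilon>"
    and C3: "(ca * L - 1) * (1 - 3 * \<mu>) \<ge> (c - \<eta>) * L"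
    and C4: "\<mu> * \<epsilon> * exp Y \<ge> lg powr ca + 1"
    and C5: "ln 2 + 2 * lg powr cb + (lg powr ca + 1) * (ln (lg powr ca + 1) + ln (1 / \<mu>) + (1 - cb) * L) < lg powr c"
  shows "(\<Sum>p | prime p \<and> p \<le> q \<and> \<psi> p \<noteq> 1. 1 / real p) \<ge> (c - \<eta>) * L"
proof (rule ccontr)
  assume H: "\<not> (\<Sum>p | prime p \<and> p \<le> q \<and> \<psi> p \<noteq> 1. 1 / real p) \<ge> (c - \<eta>) * L"
  define Sset where "Sset = {p. prime p \<and> p \<le> q \<and> \<psi> p \<noteq> 1}"
  have H': "(\<Sum>p\<in>Sset. 1 / real p) < (c - \<eta>) * L" using H unfolding Sset_def by simp
  have finS: "finite Sset" unfolding Sset_def by simp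
  have q0: "q > 0" using dc_basic(1)[OF dc] .
  have lpos: "lg > 0" using l3 by simp
  have Lpos: "L > 0" unfolding Ldef using l3 by simp
  have epos: "\<epsilon> > 0" unfolding edef using lpos by simp
  have e8: "\<epsilon> \<le> 1/8" using C1 hmu by simp
  have Y1: "Y \<ge> 1" unfolding Ydef using l3 hc1 by (intro ge_one_powr_ge_zero) auto
  have lY: "lg / Y = lg powr ca"
  proof -
    have "lg powr ca * Y = lg powr (ca + (1 - ca))" unfolding Ydef using lpos by (simp only: powr_add)
    also have "\<dots> = lg" using lpos by simp
    finally show ?thesis using Y1 by (simp add: field_simps)
  qed
  have el: "\<epsilon> * lg = lg powr cb"
    unfolding edef using lpos powr_add[of lg "cb - 1" 1] by simp
  have lneps: "ln \<epsilon> = (cb - 1) * L" unfolding edef Ldef using lpos by (simp add: ln_powr)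
  have lq: "exp lg = real q" unfolding ldef using q0 by simp
  have ln1e: "ln (1 + \<epsilon>) > 0" using epos by simp
  have ln1e_le: "ln (1 + \<epsilon>) \<le> \<epsilon>" using epos by (intro ln_add_one_self_le_self) simp
  define J where "J = nat \<lfloor>ca * L / ln (1 + \<epsilon>)\<rfloor>"
  define X where "X = (\<lambda>i::nat. exp (lg / (1 + \<epsilon>) ^ i))"
  have lnX: "ln (X i) = lg / (1 + \<epsilon>) ^ i" for i unfolding X_def by simp
  have X0: "X 0 = real q" unfolding X_def using lq by simp
  have cLpos: "ca * L / ln (1 + \<epsilon>) \<ge> 0" using hc1 Lpos ln1e by simp
  have Jup: "real J \<le> ca * L / ln (1 + \<epsilon>)" unfolding J_def using cLpos by linarith
  have Jlow: "real J \<ge> ca * L / ln (1 + \<epsilon>) - 1" unfolding J_def using cLpos by linarith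
  have powJ: "(1 + \<epsilon>) ^ J \<le> lg powr ca"
  proof -
    have e1: "1 + \<epsilon> > 0" using epos by simp
    have "(1 + \<epsilon>) ^ J = exp (real J * ln (1 + \<epsilon>))"
      using e1 by (simp add: exp_of_nat_mult)
    also have "\<dots> \<le> exp (ca * L)"
      using Jup ln1e by (simp add: pos_le_divide_eq)
    also have "\<dots> = lg powr ca" unfolding Ldef powr_def using lpos by (simp add: mult.commute)
    finally show ?thesis .
  qed
  have lnXge: "ln (X i) \<ge> Y" if "i \<le> J" for i
  proof -
    have "(1 + \<epsilon>) ^ i \<le> (1 + \<epsilon>) ^ J" using that epos by (intro power_increasing) auto
    also have "\<dots> \<le> lg powr ca" by (rule powJ)
    finally have pi: "(1 + \<epsilon>) ^ i \<le> lg powr ca" .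
    have "Y = lg / lg powr ca" using lY Y1 lpos by (simp add: field_simps)
    also have "\<dots> \<le> lg / (1 + \<epsilon>) ^ i" using pi lpos epos by (intro divide_left_mono) auto
    finally show ?thesis using lnX by simp
  qed
  have Xanti: "X j \<le> X i" if "i \<le> j" for i j
  proof -
    have "(1 + \<epsilon>) ^ i \<le> (1 + \<epsilon>) ^ j" using that epos by (intro power_increasing) auto
    then have "lg / (1 + \<epsilon>) ^ j \<le> lg / (1 + \<epsilon>) ^ i" using lpos epos by (intro divide_left_mono) auto
    then show ?thesis unfolding X_def by simp
  qed
  have Xpos: "X i > 0" for i unfolding X_def by simp
  have Xle_q: "X i \<le> real q" for i using Xanti[of 0 i] X0 by simp
  have lnXsuc: "ln (X (Suc i)) = ln (X i) / (1 + \<epsilon>)" for i unfolding lnX by (simp add: field_simps)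
  have lnXpos: "ln (X i) > 0" for i unfolding lnX using lpos epos by simp
  have Xsuc_lt: "X (Suc i) < X i" for i
  proof -
    have "ln (X (Suc i)) < ln (X i)" using lnXsuc[of i] lnXpos[of i] epos by (simp add: divide_less_eq)
    then show ?thesis using Xpos by simp
  qed
  have X1: "X i \<ge> 1" for i using lnXpos[of i] Xpos[of i] by (simp add: ln_ge_zero_iff)
  define I where "I = (\<lambda>i. PR (X (Suc i)) (X i))"
  have mass: "(\<Sum>p\<in>I i. 1 / real p) \<ge> \<epsilon> * (1 - 2 * \<mu>)" if "i < J" for i
  proof -
    have m: "(\<Sum>p\<in>I i. 1 / real p) \<ge> (ln (X i) - ln (X (Suc i)) - 8) / ln (X i)"
      unfolding I_def using X1 Xsuc_lt[of i] lnXpos[of i] Xpos[of i]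
      by (intro interval_mass) (auto simp: less_imp_le ln_gt_zero_iff)
    have b: "ln (X i) \<ge> Y" using that lnXge by simp
    have "(ln (X i) - ln (X (Suc i)) - 8) / ln (X i) = \<epsilon> / (1 + \<epsilon>) - 8 / ln (X i)"
      using lnXpos[of i] epos unfolding lnXsuc by (simp add: field_simps)
    also have "\<epsilon> / (1 + \<epsilon>) \<ge> \<epsilon> * (1 - \<mu>)"
    proof -
      have "\<epsilon> * (1 - \<mu>) * (1 + \<epsilon>) \<le> \<epsilon>"
      proof -
        have "\<epsilon> * (1 - \<mu>) * (1 + \<epsilon>) = \<epsilon> * (1 + \<epsilon> - \<mu> - \<mu> * \<epsilon>)" by (simp add: algebra_simps)
        also have "\<dots> \<le> \<epsilon> * 1"
        proof -
          have "\<mu> * \<epsilon> \<ge> 0" using epos hmu by simp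
          then have "1 + \<epsilon> - \<mu> - \<mu> * \<epsilon> \<le> 1" using C1 by linarith
          then show ?thesis using epos by (intro mult_left_mono) auto
        qed
        finally show ?thesis by simp
      qed
      then show ?thesis using epos by (simp add: field_simps)
    qed
    moreover have "8 / ln (X i) \<le> \<mu> * \<epsilon>"
    proof -
      have "8 / ln (X i) \<le> 8 / Y" using b Y1 by (intro divide_left_mono) auto
      then show ?thesis using C2 by simp
    qed
    ultimately show ?thesis using m by (simp add: algebra_simps)
  qed
  have I_sub: "I i \<subseteq> {p. prime p \<and> p \<le> q}" for i
  proof
    fix p assume "p \<in> I i"
    then have "prime p" "real p \<le> X i" unfolding I_def PR_def by auto
    then show "p \<in> {p. prime p \<and> p \<le> q}" using Xle_q[of i] by simp
  qed
  have I_fin: "finite (I i)" for i unfolding I_def by (rule PR_finite)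
  have I_disj: "I i \<inter> I j = {}" if "i \<noteq> j" for i j
  proof -
    have "I i \<inter> I j = {}" if "i < j" for i j
    proof -
      have "X j \<le> X (Suc i)" using that by (intro Xanti) simp
      then show ?thesis unfolding I_def PR_def by auto
    qed
    then show ?thesis using \<open>i \<noteq> j\<close> by (metis Int_commute linorder_neqE_nat)
  qed
  define T where "T = (\<lambda>i. {p \<in> I i. \<psi> p = 1})"
  have exi: "\<exists>i<J. (\<Sum>p\<in>T i. 1 / real p) \<ge> \<mu> * \<epsilon>"
  proof (rule ccontr)
    assume "\<not> (\<exists>i<J. (\<Sum>p\<in>T i. 1 / real p) \<ge> \<mu> * \<epsilon>)"
    then have small: "(\<Sum>p\<in>T i. 1 / real p) < \<mu> * \<epsilon>" if "i < J" for i using that by auto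
    define S where "S = (\<lambda>i. {p \<in> I i. \<psi> p \<noteq> 1})"
    have split: "(\<Sum>p\<in>I i. 1 / real p) = (\<Sum>p\<in>T i. 1 / real p) + (\<Sum>p\<in>S i. 1 / real p)" for i
    proof -
      have "I i = T i \<union> S i" "T i \<inter> S i = {}" unfolding T_def S_def by auto
      moreover have "finite (T i)" "finite (S i)" unfolding T_def S_def using I_fin by auto
      ultimately show ?thesis by (simp add: sum.union_disjoint)
    qed
    have Slow: "(\<Sum>p\<in>S i. 1 / real p) \<ge> \<epsilon> * (1 - 3 * \<mu>)" if "i < J" for i
      using mass[OF that] small[OF that] split[of i] by (simp add: algebra_simps)
    have "real J * (\<epsilon> * (1 - 3 * \<mu>)) = (\<Sum>i<J. \<epsilon> * (1 - 3 * \<mu>))" by simp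
    also have "\<dots> \<le> (\<Sum>i<J. \<Sum>p\<in>S i. 1 / real p)" using Slow by (intro sum_mono) auto
    also have "\<dots> = (\<Sum>p\<in>(\<Union>i<J. S i). 1 / real p)"
    proof (rule sum.UNION_disjoint[symmetric])
      show "finite {..<J}" by simp
      show "\<forall>i\<in>{..<J}. finite (S i)" unfolding S_def using I_fin by auto
      show "\<forall>i\<in>{..<J}. \<forall>j\<in>{..<J}. i \<noteq> j \<longrightarrow> S i \<inter> S j = {}"
        unfolding S_def using I_disj by blast
    qed
    also have "\<dots> \<le> (\<Sum>p\<in>Sset. 1 / real p)"
    proof (rule sum_mono2[OF finS])
      show "(\<Union>i<J. S i) \<subseteq> Sset" unfolding S_def Sset_def using I_sub by blast
      fix b assume "b \<in> Sset - (\<Union>i<J. S i)" then show "0 \<le> 1 / real b" by simp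
    qed
    finally have A: "real J * (\<epsilon> * (1 - 3 * \<mu>)) \<le> (\<Sum>p\<in>Sset. 1 / real p)" .
    have "real J * \<epsilon> \<ge> ca * L - \<epsilon>"
    proof -
      have "real J * \<epsilon> \<ge> (ca * L / ln (1 + \<epsilon>) - 1) * \<epsilon>" using Jlow epos by (intro mult_right_mono) auto
      moreover have "ca * L / ln (1 + \<epsilon>) * \<epsilon> \<ge> ca * L"
      proof -
        have "ca * L \<le> ca * L / ln (1 + \<epsilon>) * \<epsilon> \<longleftrightarrow> ca * L * ln (1 + \<epsilon>) \<le> ca * L * \<epsilon>"
          using ln1e by (simp add: field_simps)
        moreover have "ca * L * ln (1 + \<epsilon>) \<le> ca * L * \<epsilon>" using ln1e_le hc1 Lpos by (intro mult_left_mono) auto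
        ultimately show ?thesis by simp
      qed
      ultimately show ?thesis by (simp add: algebra_simps)
    qed
    then have "real J * \<epsilon> \<ge> ca * L - 1" using e8 by linarith
    then have "real J * \<epsilon> * (1 - 3 * \<mu>) \<ge> (ca * L - 1) * (1 - 3 * \<mu>)" using hmu by (intro mult_right_mono) auto
    then have "(\<Sum>p\<in>Sset. 1 / real p) \<ge> (c - \<eta>) * L" using A C3 by (simp add: algebra_simps)
    then show False using H' by simp
  qed
  then obtain i where iJ: "i < J" and Ti: "(\<Sum>p\<in>T i. 1 / real p) \<ge> \<mu> * \<epsilon>" by blast
  define a where "a = X (Suc i)"
  define b where "b = X i"
  define P0 where "P0 = T i"
  have finP0: "finite P0" unfolding P0_def T_def using I_fin by auto
  have apos: "a > 0" unfolding a_def by (rule Xpos)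
  have lnb_Y: "ln b \<ge> Y" unfolding b_def using iJ lnXge by simp
  have lna_Y: "ln a \<ge> Y" unfolding a_def using iJ lnXge by simp
  have lnb_l: "ln b \<le> lg" unfolding b_def using lnX[of i] lpos epos
    by (simp add: divide_le_eq one_le_power mult_le_cancel_left1)
  have lna: "ln a = ln b / (1 + \<epsilon>)" unfolding a_def b_def by (rule lnXsuc)
  have lnbpos: "ln b > 0" using lnb_Y Y1 by simp
  have bpos: "b > 0" unfolding b_def by (rule Xpos)
  have cardP0: "real (card P0) \<ge> \<mu> * \<epsilon> * a"
  proof -
    have "(\<Sum>p\<in>P0. 1 / real p) \<le> (\<Sum>p\<in>P0. 1 / a)"
    proof (rule sum_mono)
      fix p assume "p \<in> P0"
      then have "a < real p" unfolding P0_def T_def I_def PR_def a_def by auto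
      then show "1 / real p \<le> 1 / a" using apos by (intro divide_left_mono) auto
    qed
    also have "\<dots> = real (card P0) / a" by simp
    finally have "\<mu> * \<epsilon> \<le> real (card P0) / a" using Ti unfolding P0_def by simp
    then show ?thesis using apos by (simp add: pos_le_divide_eq)
  qed
  define k where "k = nat \<lceil>lg / ln b\<rceil>"
  have xpos: "lg / ln b > 0" using lpos lnbpos by simp
  have kx: "real k = of_int \<lceil>lg / ln b\<rceil>" unfolding k_def using xpos by simp
  have kge: "real k \<ge> lg / ln b" unfolding kx by (rule le_of_int_ceiling)
  have kle: "real k \<le> lg / ln b + 1" unfolding kx by (rule of_int_ceiling_le_add_one)
  have k1: "k \<ge> 1"
  proof -
    have "real k > 0" using kge xpos by linarith
    then show ?thesis by simp
  qed
  have kle2: "real k \<le> lg powr ca + 1"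
  proof -
    have "lg / ln b \<le> lg / Y" using lnb_Y Y1 lpos by (intro divide_left_mono) auto
    then show ?thesis using kle lY by simp
  qed
  have klnb: "real k * ln b \<ge> lg" using kge lnbpos by (simp add: divide_le_eq)
  have klnb2: "real k * ln b \<le> lg + ln b"
  proof -
    have "real k * ln b \<le> (lg / ln b + 1) * ln b" using kle lnbpos by (intro mult_right_mono) auto
    also have "\<dots> = lg + ln b" using lnbpos by (simp add: field_simps)
    finally show ?thesis .
  qed
  have bk_q: "b ^ k \<ge> real q"
  proof -
    have "b ^ k = exp (real k * ln b)" using bpos by (simp add: exp_of_nat_mult)
    also have "\<dots> \<ge> exp lg" using klnb by simp
    finally show ?thesis using lq by simp
  qed
  have bkpos: "b ^ k > 0" using bpos by simp
  define N where "N = nat \<lceil>b ^ k / real q\<rceil>"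
  have qr: "real q > 0" using q0 by simp
  have Nq1: "real (N * q) \<ge> b ^ k"
  proof -
    have "real N = of_int \<lceil>b ^ k / real q\<rceil>" unfolding N_def using bkpos qr by simp
    then have "real N \<ge> b ^ k / real q" by (simp add: le_of_int_ceiling)
    then show ?thesis using qr by (simp add: pos_divide_le_eq)
  qed
  have Nq2: "real (N * q) \<le> 2 * b ^ k"
  proof -
    have "real N = of_int \<lceil>b ^ k / real q\<rceil>" unfolding N_def using bkpos qr by simp
    then have "real N \<le> b ^ k / real q + 1" by (simp add: of_int_ceiling_le_add_one)
    then have "real N * real q \<le> b ^ k + real q" using qr by (simp add: field_simps)
    then show ?thesis using bk_q by simp
  qed
  have kP0: "k \<le> card P0"
  proof -
    have "exp Y \<le> a" using lna_Y apos by (metis exp_le_cancel_iff exp_ln)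
    then have "\<mu> * \<epsilon> * exp Y \<le> \<mu> * \<epsilon> * a" using hmu epos by (intro mult_left_mono) auto
    then have "real k \<le> real (card P0)" using C4 kle2 cardP0 by linarith
    then show ?thesis by simp
  qed
  have P0prop: "prime p \<and> \<psi> p = 1 \<and> real p \<le> b" if "p \<in> P0" for p
    using that unfolding P0_def T_def I_def PR_def b_def by auto
  have choose_le: "card P0 choose k \<le> card {n \<in> {1..N*q}. \<psi> n = 1}"
    by (rule subset_products[OF dc finP0 P0prop kP0 Nq1])
  have kc: "card {n \<in> {1..N*q}. \<psi> n = 1} * character_order q \<psi> \<le> N * q"
    by (rule kernel_count[OF dc])
  define d where "d = real (character_order q \<psi>)"
  have dpos: "d > 0" using ord unfolding d_def by (metis exp_gt_zero less_le_trans)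
  have lnd: "ln d \<ge> lg powr c" using ord dpos unfolding d_def by (metis exp_le_cancel_iff exp_ln)
  have binom: "(real (card P0) / real k) ^ k \<le> real (card P0 choose k)"
    by (rule binomial_ge_n_over_k_pow_k[OF kP0])
  have kpos: "real k > 0" using k1 by simp
  have main: "(\<mu> * \<epsilon> * a / real k) ^ k * d \<le> 2 * b ^ k"
  proof -
    have "(\<mu> * \<epsilon> * a / real k) ^ k \<le> (real (card P0) / real k) ^ k"
      using cardP0 kpos hmu epos apos by (intro power_mono divide_right_mono) auto
    also have "\<dots> \<le> real (card {n \<in> {1..N*q}. \<psi> n = 1})"
      using binom choose_le by (meson of_nat_le_iff order_trans)
    finally have "(\<mu> * \<epsilon> * a / real k) ^ k * d \<le> real (card {n \<in> {1..N*q}. \<psi> n = 1}) * d"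
      using dpos by (intro mult_right_mono) auto
    also have "\<dots> \<le> real (N * q)" using kc unfolding d_def by (metis of_nat_le_iff of_nat_mult)
    also have "\<dots> \<le> 2 * b ^ k" by (rule Nq2)
    finally show ?thesis .
  qed
  have mea_pos: "\<mu> * \<epsilon> * a / real k > 0" using hmu epos apos kpos by simp
  have "ln ((\<mu> * \<epsilon> * a / real k) ^ k * d) \<le> ln (2 * b ^ k)"
    using main mea_pos dpos by (intro ln_mono) auto
  then have L1: "real k * (ln \<mu> + ln \<epsilon> + ln a - ln (real k)) + ln d \<le> ln 2 + real k * ln b"
    using mea_pos dpos hmu epos apos kpos bpos by (simp add: ln_mult ln_div ln_realpow)
  have t1: "real k * (ln b - ln a) \<le> 2 * lg powr cb"
  proof -
    have "ln b - ln a = \<epsilon> * ln b / (1 + \<epsilon>)" unfolding lna using epos by (simp add: field_simps)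
    also have "\<dots> \<le> \<epsilon> * ln b" using epos lnbpos by (simp add: divide_le_eq)
    finally have "real k * (ln b - ln a) \<le> real k * (\<epsilon> * ln b)" using kpos by (intro mult_left_mono) auto
    also have "\<dots> = \<epsilon> * (real k * ln b)" by simp
    also have "\<dots> \<le> \<epsilon> * (lg + lg)" using klnb2 lnb_l epos by (intro mult_left_mono) auto
    also have "\<dots> = 2 * lg powr cb" using el by simp
    finally show ?thesis .
  qed
  have t2: "real k * ln (real k) \<le> (lg powr ca + 1) * ln (lg powr ca + 1)"
  proof -
    have "ln (real k) \<le> ln (lg powr ca + 1)" using kle2 kpos by (intro ln_mono) auto
    moreover have "ln (real k) \<ge> 0" using k1 by simp
    ultimately show ?thesis using kle2 kpos by (intro mult_mono) auto
  qed
  have t3: "real k * (- ln \<mu> - ln \<epsilon>) \<le> (lg powr ca + 1) * (ln (1 / \<mu>) + (1 - cb) * L)"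
  proof -
    have e: "- ln \<mu> - ln \<epsilon> = ln (1 / \<mu>) + (1 - cb) * L" using lneps hmu by (simp add: ln_div algebra_simps)
    have "ln (1 / \<mu>) \<ge> 0" using hmu by simp
    moreover have "(1 - cb) * L \<ge> 0" using hc2 Lpos by simp
    ultimately show ?thesis unfolding e using kle2 kpos by (intro mult_right_mono) auto
  qed
  have "lg powr c \<le> ln 2 + real k * (ln b - ln a) + real k * ln (real k) + real k * (- ln \<mu> - ln \<epsilon>)"
    using L1 lnd by (simp add: algebra_simps)
  also have "\<dots> \<le> ln 2 + 2 * lg powr cb + (lg powr ca + 1) * ln (lg powr ca + 1) + (lg powr ca + 1) * (ln (1 / \<mu>) + (1 - cb) * L)"
    using t1 t2 t3 by linarith
  also have "\<dots> = ln 2 + 2 * lg powr cb + (lg powr ca + 1) * (ln (lg powr ca + 1) + ln (1 / \<mu>) + (1 - cb) * L)"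
    by (simp add: algebra_simps)
  finally show False using C5 by simp
qed

lemma ev1: "0 < m \<Longrightarrow> e < 0 \<Longrightarrow> eventually (\<lambda>x::real. x powr e \<le> m) at_top"
  by real_asymp
lemma ev2: "0 < m \<Longrightarrow> c1 < c2 \<Longrightarrow> c1 < 1 \<Longrightarrow> eventually (\<lambda>x::real. 8 / x powr (1 - c1) \<le> m * x powr (c2 - 1)) at_top"
  by real_asymp
lemma ev3: "eventually (\<lambda>x::real. ln x \<ge> K) at_top"
  by real_asymp
lemma ev4: "0 < m \<Longrightarrow> c1 < 1 \<Longrightarrow> eventually (\<lambda>x::real. m * x powr (c2 - 1) * exp (x powr (1 - c1)) \<ge> x powr c1 + 1) at_top"
  by real_asymp
lemma ev5: "0 < c1 \<Longrightarrow> c1 < c2 \<Longrightarrow> c2 < c \<Longrightarrow> eventually (\<lambda>x::real. ln 2 + 2 * x powr c2 + (x powr c1 + 1) * (ln (x powr c1 + 1) + K + (1 - c2) * ln x) < x powr c) at_top"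
  by real_asymp

theorem proposition4p1:
  fixes c :: real
  assumes "0 < c" and "c < 1"
  shows "\<forall>\<eta>>0. \<exists>q0::nat. \<forall>q\<ge>q0. \<forall>\<psi>::nat \<Rightarrow> complex.
    primitive_character q \<psi> \<and> real (character_order q \<psi>) \<ge> exp ((ln (real q)) powr c) \<longrightarrow>
    (\<Sum>p | prime p \<and> p \<le> q \<and> \<psi> p \<noteq> 1. 1 / real p) \<ge> (c - \<eta>) * ln (ln (real q))"
proof (intro allI impI)
  fix \<eta> :: real assume eta: "\<eta> > 0"
  have sum_nonneg: "(\<Sum>p | prime p \<and> p \<le> q \<and> \<psi> p \<noteq> 1. 1 / real p) \<ge> 0" for q :: nat and \<psi> :: "nat \<Rightarrow> complex"
    by (intro sum_nonneg) auto
  show "\<exists>q0::nat. \<forall>q\<ge>q0. \<forall>\<psi>::nat \<Rightarrow> complex.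
    primitive_character q \<psi> \<and> real (character_order q \<psi>) \<ge> exp ((ln (real q)) powr c) \<longrightarrow>
    (\<Sum>p | prime p \<and> p \<le> q \<and> \<psi> p \<noteq> 1. 1 / real p) \<ge> (c - \<eta>) * ln (ln (real q))"
  proof (cases "\<eta> \<ge> c")
    case True
    show ?thesis
    proof (intro exI[of _ 3] allI impI)
      fix q :: nat and \<psi> :: "nat \<Rightarrow> complex" assume q: "3 \<le> q"
      have "exp 1 \<le> real q"
      proof -
        have "exp (1::real) \<le> 3" using exp_le by linarith
        then show ?thesis using q by linarith
      qed
      then have "1 \<le> ln (real q)" using q by (simp add: ln_ge_iff)
      then have "ln (ln (real q)) \<ge> 0" by simp
      then have "(c - \<eta>) * ln (ln (real q)) \<le> 0" using True by (simp add: mult_nonpos_nonneg)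
      then show "(\<Sum>p | prime p \<and> p \<le> q \<and> \<psi> p \<noteq> 1. 1 / real p) \<ge> (c - \<eta>) * ln (ln (real q))"
        using sum_nonneg[of q \<psi>] by linarith
    qed
  next
    case False
    then have etac: "\<eta> < c" by simp
    define c1 where "c1 = c - \<eta> / 2"
    define c2 where "c2 = c - \<eta> / 4"
    define \<mu> where "\<mu> = \<eta> / 8"
    have hc1: "0 < c1" "c1 < 1" unfolding c1_def using etac eta assms by auto
    have hc12: "c1 < c2" "c2 < c" "c2 < 1" unfolding c1_def c2_def using eta assms by auto
    have hmu: "0 < \<mu>" "\<mu> \<le> 1/8" unfolding \<mu>_def using eta etac assms by auto
    define \<kappa> where "\<kappa> = c1 * (1 - 3 * \<mu>) - (c - \<eta>)"
    have kappa: "\<kappa> > 0"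
    proof -
      have "\<kappa> = \<eta> / 2 - 3 * c * \<eta> / 8 + 3 * \<eta> * \<eta> / 16"
        unfolding \<kappa>_def c1_def \<mu>_def by (simp add: field_simps)
      moreover have "c * \<eta> \<le> \<eta>" using assms eta by simp
      moreover have "\<eta> * \<eta> \<ge> 0" by simp
      ultimately show ?thesis using eta by linarith
    qed
    have ev: "eventually (\<lambda>x::real. x \<ge> 3 \<and> x powr (c2 - 1) \<le> \<mu>
        \<and> 8 / x powr (1 - c1) \<le> \<mu> * x powr (c2 - 1)
        \<and> ln x \<ge> (1 - 3 * \<mu>) / \<kappa>
        \<and> \<mu> * x powr (c2 - 1) * exp (x powr (1 - c1)) \<ge> x powr c1 + 1
        \<and> ln 2 + 2 * x powr c2 + (x powr c1 + 1) * (ln (x powr c1 + 1) + ln (1 / \<mu>) + (1 - c2) * ln x) < x powr c) at_top"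
    proof -
      have e0: "eventually (\<lambda>x::real. x \<ge> 3) at_top" by (rule eventually_ge_at_top)
      have e1: "eventually (\<lambda>x::real. x powr (c2 - 1) \<le> \<mu>) at_top"
        using hmu hc12 by (intro ev1) auto
      have e2: "eventually (\<lambda>x::real. 8 / x powr (1 - c1) \<le> \<mu> * x powr (c2 - 1)) at_top"
        using hmu hc12 hc1 by (intro ev2) auto
      have e3: "eventually (\<lambda>x::real. ln x \<ge> (1 - 3 * \<mu>) / \<kappa>) at_top" by (rule ev3)
      have e4: "eventually (\<lambda>x::real. \<mu> * x powr (c2 - 1) * exp (x powr (1 - c1)) \<ge> x powr c1 + 1) at_top"
        using hmu hc1 by (intro ev4) auto
      have e5: "eventually (\<lambda>x::real. ln 2 + 2 * x powr c2 + (x powr c1 + 1) * (ln (x powr c1 + 1) + ln (1 / \<mu>) + (1 - c2) * ln x) < x powr c) at_top"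
        using hc1 hc12 by (intro ev5) auto
      show ?thesis
        by (rule eventually_conj[OF e0 eventually_conj[OF e1 eventually_conj[OF e2 eventually_conj[OF e3 eventually_conj[OF e4 e5]]]]])
    qed
    then obtain x0 where x0: "\<And>x. x \<ge> x0 \<Longrightarrow> x \<ge> 3 \<and> x powr (c2 - 1) \<le> \<mu>
        \<and> 8 / x powr (1 - c1) \<le> \<mu> * x powr (c2 - 1)
        \<and> ln x \<ge> (1 - 3 * \<mu>) / \<kappa>
        \<and> \<mu> * x powr (c2 - 1) * exp (x powr (1 - c1)) \<ge> x powr c1 + 1
        \<and> ln 2 + 2 * x powr c2 + (x powr c1 + 1) * (ln (x powr c1 + 1) + ln (1 / \<mu>) + (1 - c2) * ln x) < x powr c"
      unfolding eventually_at_top_linorder by blast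
    define q0 where "q0 = nat \<lceil>exp (max x0 3)\<rceil>"
    show ?thesis
    proof (intro exI[of _ q0] allI impI)
      fix q :: nat and \<psi> :: "nat \<Rightarrow> complex"
      assume q: "q0 \<le> q"
      assume hyp: "primitive_character q \<psi> \<and> real (character_order q \<psi>) \<ge> exp ((ln (real q)) powr c)"
      have dc: "dirichlet_character q \<psi>" using hyp unfolding primitive_character_def by simp
      have "exp (max x0 3) \<le> real q0" unfolding q0_def by linarith
      also have "\<dots> \<le> real q" using q by simp
      finally have eq: "exp (max x0 3) \<le> real q" .
      have qpos: "real q > 0" using eq by (metis exp_gt_zero less_le_trans)
      define lg where "lg = ln (real q)"
      have "ln (exp (max x0 3)) \<le> ln (real q)" using eq by (intro ln_mono) auto
      then have lgx: "lg \<ge> max x0 3" unfolding lg_def by (simp only: ln_exp)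
      then have conds: "lg \<ge> 3 \<and> lg powr (c2 - 1) \<le> \<mu>
        \<and> 8 / lg powr (1 - c1) \<le> \<mu> * lg powr (c2 - 1)
        \<and> ln lg \<ge> (1 - 3 * \<mu>) / \<kappa>
        \<and> \<mu> * lg powr (c2 - 1) * exp (lg powr (1 - c1)) \<ge> lg powr c1 + 1
        \<and> ln 2 + 2 * lg powr c2 + (lg powr c1 + 1) * (ln (lg powr c1 + 1) + ln (1 / \<mu>) + (1 - c2) * ln lg) < lg powr c"
        using x0[of lg] by simp
      have C3: "(c1 * ln lg - 1) * (1 - 3 * \<mu>) \<ge> (c - \<eta>) * ln lg"
      proof -
        have "ln lg * \<kappa> \<ge> 1 - 3 * \<mu>" using conds kappa by (simp add: pos_divide_le_eq)
        then show ?thesis unfolding \<kappa>_def by (simp add: algebra_simps)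
      qed
      have "(\<Sum>p | prime p \<and> p \<le> q \<and> \<psi> p \<noteq> 1. 1 / real p) \<ge> (c - \<eta>) * ln lg"
      proof (rule core[where ca = c1 and cb = c2 and \<mu> = \<mu> and lg = lg and
            \<epsilon> = "lg powr (c2 - 1)" and Y = "lg powr (1 - c1)" and L = "ln lg"])
        show "dirichlet_character q \<psi>" by (rule dc)
        show "exp (lg powr c) \<le> real (character_order q \<psi>)" using hyp unfolding lg_def by simp
        show "lg = ln (real q)" by (rule lg_def)
      qed (use conds hc1 hc12 hmu C3 in auto)
      then show "(\<Sum>p | prime p \<and> p \<le> q \<and> \<psi> p \<noteq> 1. 1 / real p) \<ge> (c - \<eta>) * ln (ln (real q))"
        unfolding lg_def .
    qed
  qed
qed

end
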